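(* Let $d,n$ be positive integers with $d\le n$. If $S\subseteq\mathbb{Z}_{2^n}$ is a union of some of the layers $L_1,\dots,L_{n+1}$ and $|S|>|\mathcal{C}_d|$, then $S$ contains a projective $d$-cube, i.e.\ there is a multiset $T$ of $d$ elements of $\mathbb{Z}_{2^n}$ with $\Sigma^*T\subseteq S$.
   Context: For a multiset $T=\{a_1,\dots,a_d\}$ of (not necessarily distinct) elements of $\mathbb{Z}_{2^n}$, $\Sigma^*T=\{\sum_{i\in I}a_i \bmod 2^n:\emptyset\ne I\subseteq[d]\}$. Layers: for $1\le i\le n$, $L_i=\{x\in\mathbb{Z}_{2^n}: x\equiv 2^{i-1}\pmod{2^i}\}$, $L_{n+1}=\{0\}$. Define index sets $I_1=\emptyset$ and, for $d\ge2$ with $\ell$ the largest integer with $2^\ell\le d$, $I_d=\{1,\dots,\ell\}\cup\{j+\ell+1: j\in I_{d-2^\ell+1}\}$; set $\mathcal{C}_d=\bigcup_{i\in I_d}L_i$ (for $d\le n$ all indices are at most $n$). *)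

theory Defs
  imports Main "HOL-Library.Multiset"
begin

text \<open>Elements of Z_{2^n} are represented by natural numbers below 2^n.\<close>

definition layer :: "nat \<Rightarrow> nat \<Rightarrow> nat set" where
  "layer n i = (if i = n + 1 then {0}
     else {x. x < 2^n \<and> x mod 2^i = 2^(i-1)})"

definition subset_sums :: "nat \<Rightarrow> nat multiset \<Rightarrow> nat set" where
  "subset_sums n T = {sum_mset U mod 2^n | U. U \<subseteq># T \<and> U \<noteq> {#}}"

definition ell :: "nat \<Rightarrow> nat" where
  "ell d = (GREATEST l. (2::nat)^l \<le> d)"

lemma ell_ge1: assumes "2 \<le> d" shows "1 \<le> ell d"
proof -
  have b: "\<forall>y. 2^y \<le> d \<longrightarrow> y \<le> d"
    using less_exp by (metis le_trans less_imp_le_nat)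
  have "(2::nat)^1 \<le> d" using assms by simp
  then show ?thesis unfolding ell_def using Greatest_le_nat[of "\<lambda>l. (2::nat)^l \<le> d" 1 d] b by blast
qed

function Iset :: "nat \<Rightarrow> nat set" where
  "Iset d = (if d \<le> 1 then {}
     else {1..ell d} \<union> (\<lambda>j. j + ell d + 1) ` Iset (d - 2^ell d + 1))"
  by auto
termination
proof (relation "measure id")
  fix d :: nat assume "\<not> d \<le> 1"
  then have "1 \<le> ell d" using ell_ge1 by simp
  then have "(2::nat) \<le> 2 ^ ell d"
    by (metis power_increasing power_one_right zero_less_numeral numeral_le_one_iff semiring_norm(69) one_le_numeral)
  then show "(d - 2 ^ ell d + 1, d) \<in> measure id" using \<open>\<not> d \<le> 1\<close> by simp
qed auto

definition Cset :: "nat \<Rightarrow> nat \<Rightarrow> nat set" where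
  "Cset n d = (\<Union>i\<in>Iset d. layer n i)"

end

theory Submission
  imports Defs
begin


lemma ell_props: assumes "1 \<le> d" shows "2 ^ ell d \<le> d" "d < 2 ^ (ell d + 1)"
proof -
  have b: "\<forall>y. 2^y \<le> d \<longrightarrow> y \<le> d"
    using less_exp by (metis le_trans less_imp_le_nat)
  have "(2::nat)^0 \<le> d" using assms by simp
  then show 1: "2 ^ ell d \<le> d" unfolding ell_def using GreatestI_nat[of "\<lambda>l. (2::nat)^l \<le> d" 0 d] b by blast
  show "d < 2 ^ (ell d + 1)"
  proof (rule ccontr)
    assume "\<not> ?thesis"
    then have "ell d + 1 \<le> ell d" unfolding ell_def
      using Greatest_le_nat[of "\<lambda>l. (2::nat)^l \<le> d" "ell d + 1" d] b
      by (metis ell_def not_less)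
    then show False by simp
  qed
qed


lemma Iset_rec: "2 \<le> d \<Longrightarrow> Iset d = {1..ell d} \<union> (\<lambda>j. j + ell d + 1) ` Iset (d - 2^ell d + 1)"
  by (subst Iset.simps) simp


lemma layer_sub: "layer n i \<subseteq> {..<2^n}"
  unfolding layer_def by auto


lemma Cset_sub: "Cset n d \<subseteq> {..<2^n}"
  unfolding Cset_def using layer_sub by blast


lemma mod_pow_exact: "(2::nat)^i dvd x \<Longrightarrow> \<not> 2^(Suc i) dvd x \<Longrightarrow> x mod 2^(Suc i) = 2^i"
proof -
  assume a: "(2::nat)^i dvd x" "\<not> 2^(Suc i) dvd x"
  then obtain q where x: "x = 2^i*q" by blast
  have "odd q"
  proof
    assume "even q"
    then obtain r where "q = 2*r" by blast
    then have "x = 2^(Suc i) * r" using x by simp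
    then show False using a(2) by simp
  qed
  have "x mod (2^i*2) = 2^i * (q mod 2)" unfolding x by (rule mult_mod_right[symmetric])
  also have "q mod 2 = 1" using \<open>odd q\<close> by (simp add: odd_iff_mod_2_eq_one)
  finally show ?thesis by (simp add: mult.commute)
qed

lemma exists_val: "\<not> (2::nat)^l dvd x \<Longrightarrow> \<exists>i<l. 2^i dvd x \<and> \<not> 2^(Suc i) dvd x"
proof (induction l)
  case 0 then show ?case by simp
next
  case (Suc l)
  then show ?case by (cases "2^l dvd x") (auto intro: less_SucI)
qed


lemma U_layer: assumes "x < 2^n" "\<not> (2::nat)^l dvd x" shows "\<exists>i\<in>{1..l}. x \<in> layer n i"
proof -
  obtain i where i: "i < l" "2^i dvd x" "\<not> 2^(Suc i) dvd x" using exists_val assms(2) by blast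
  have "Suc i \<noteq> n + 1"
  proof
    assume "Suc i = n + 1"
    then have "2^n dvd x" using i by simp
    then have "x = 0" using assms(1) by (metis dvd_imp_le not_less not_gr0)
    then show False using i by simp
  qed
  then have "x \<in> layer n (Suc i)" unfolding layer_def using assms(1) mod_pow_exact[OF i(2,3)] by simp
  then show ?thesis using i(1) by force
qed


lemma layer_val: assumes "x \<in> layer n i" "i \<noteq> n + 1"
  shows "1 \<le> i" "i \<le> n" "x < 2^n" "2^(i-1) dvd x" "\<not> 2^i dvd x"
proof -
  have x: "x < 2^n" "x mod 2^i = 2^(i-1)" using assms unfolding layer_def by auto
  show "x < 2^n" using x by simp
  show i1: "1 \<le> i" using x by (cases i) auto
  show "i \<le> n"
  proof (rule ccontr)
    assume "\<not> i \<le> n"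
    then have "(2::nat)^n \<le> 2^(i-1)" by simp
    moreover have "x mod 2^i \<le> x" by simp
    ultimately show False using x by linarith
  qed
  have "(2::nat)^(i-1) dvd 2^i" by (simp add: le_imp_power_dvd)
  then show "2^(i-1) dvd x" using x(2) by (metis dvd_mod_iff dvd_refl)
  show "\<not> 2^i dvd x" using x(2) by auto
qed


lemma card_mult: assumes k: "k \<le> n" shows "card {y::nat. y < 2^n \<and> 2^k dvd y} = 2^(n-k)"
proof -
  have "{y::nat. y < 2^n \<and> 2^k dvd y} = (\<lambda>q. 2^k*q) ` {..<2^(n-k)}"
  proof (safe)
    fix y :: nat assume y: "y < 2^n" "2^k dvd y"
    then obtain q where q: "y = 2^k*q" by blast
    have "(2::nat)^n = 2^k * 2^(n-k)" using k by (simp add: power_add[symmetric])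
    then have "q < 2^(n-k)" using y q by simp
    then show "y \<in> (\<lambda>q. 2^k*q) ` {..<2^(n-k)}" using q by blast
  next
    fix q :: nat assume "q < 2^(n-k)"
    then have "2^k*q < 2^k*2^(n-k)" by simp
    also have "... = 2^n" using k by (simp add: power_add[symmetric])
    finally show "2^k*q < (2::nat)^n" .
  qed simp
  moreover have "inj_on (\<lambda>q. (2::nat)^k*q) {..<2^(n-k)}" by (simp add: inj_on_def)
  ultimately show ?thesis by (simp add: card_image)
qed


lemma image_mset_sub: "A \<subseteq># image_mset f B \<Longrightarrow> \<exists>C. C \<subseteq># B \<and> A = image_mset f C"
proof (induction B arbitrary: A)
  case empty then show ?case by simp
next
  case (add b B)
  show ?case
  proof (cases "f b \<in># A")
    case True
    then obtain A' where A: "A = add_mset (f b) A'" by (metis insert_DiffM)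
    then have "A' \<subseteq># image_mset f B" using add.prems by simp
    then obtain C where "C \<subseteq># B" "A' = image_mset f C" using add.IH by blast
    then show ?thesis using A by (intro exI[of _ "add_mset b C"]) simp
  next
    case False
    have "A \<subseteq># image_mset f B"
      unfolding subseteq_mset_def
    proof
      fix x show "count A x \<le> count (image_mset f B) x"
      proof -
        have c: "count A x \<le> count (add_mset (f b) (image_mset f B)) x"
          using add.prems by (simp add: subseteq_mset_def)
        show ?thesis
        proof (cases "x = f b")
          case True
          then have "count A x = 0" using False by (simp add: not_in_iff)
          then show ?thesis by simp
        next
          case False
          then show ?thesis using c by simp
        qed
      qed
    qed
    then obtain C where C: "C \<subseteq># B" "A = image_mset f C" using add.IH by blast
    have "B \<subseteq># add_mset b B" by (metis add_mset_add_single mset_subset_eq_add_left)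
    then show ?thesis using C by (intro exI[of _ C]) (meson subset_mset.order_trans)
  qed
qed




definition lclosed :: "nat \<Rightarrow> nat set \<Rightarrow> bool" where
  "lclosed n S \<longleftrightarrow> (\<forall>x\<in>S. \<forall>y<2^n. (\<forall>k\<le>n. (2::nat)^k dvd x \<longleftrightarrow> 2^k dvd y) \<longrightarrow> y \<in> S)"

lemma same_val:
  fixes x y :: nat
  assumes "(2::nat)^i dvd x" "\<not> 2^(Suc i) dvd x" "2^i dvd y" "\<not> 2^(Suc i) dvd y"
  shows "(2::nat)^k dvd x \<longleftrightarrow> 2^k dvd y"
proof (cases "k \<le> i")
  case True
  then have "(2::nat)^k dvd 2^i" by (simp add: le_imp_power_dvd)
  then show ?thesis using assms by (meson dvd_trans)
next
  case False
  then have "Suc i \<le> k" by simp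
  then have "(2::nat)^(Suc i) dvd 2^k" by (rule le_imp_power_dvd)
  then show ?thesis using assms by (meson dvd_trans)
qed

lemma single_sub: assumes "W \<subseteq># {#x#}" "W \<noteq> {#}" shows "W = {#x#}"
proof -
  obtain a M where "W = add_mset a M" using assms(2) by (metis multiset_cases)
  then show ?thesis using assms(1) by simp
qed

lemma mul_layer:
  assumes "y \<in> layer m j"
  shows "2^(l+1)*y \<in> layer (m+l+1) (j+l+1)"
proof (cases "j = m + 1")
  case True
  then show ?thesis using assms unfolding layer_def by simp
next
  case False
  have j: "1 \<le> j" "y < 2^m" using layer_val[OF assms False] by auto
  have ym: "y mod 2^j = 2^(j-1)" using assms False unfolding layer_def by simp
  have "(2::nat)^(l+1)*y < 2^(l+1)*2^m" using j by simp
  also have "... = 2^(m+l+1)" by (simp add: power_add[symmetric])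
  finally have lt: "(2::nat)^(l+1)*y < 2^(m+l+1)" .
  have "(2^(l+1)*y) mod 2^(j+l+1) = (2^(l+1)*y) mod (2^(l+1)*2^j)"
    by (simp add: power_add[symmetric] add.commute)
  also have "... = 2^(l+1) * (y mod 2^j)" by (rule mult_mod_right[symmetric])
  also have "... = 2^(l+1) * 2^(j-1)" using ym by simp
  also have "... = 2^(j+l+1-1)"
  proof -
    have "j+l+1-1 = (l+1)+(j-1)" using j(1) by simp
    then show ?thesis by (simp only: power_add)
  qed
  finally show ?thesis using lt False unfolding layer_def by simp
qed



declare Iset.simps[simp del]

lemma sum_ones: "\<forall>y\<in>#W. y = (1::nat) \<Longrightarrow> sum_mset W = size W"
  by (induction W) auto

lemma main_lemma:
  assumes "1 \<le> d" "S \<subseteq> {..<2^n}" "lclosed n S" "card (Cset n d) < card S"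
  shows "\<exists>T. size T = d \<and> set_mset T \<subseteq> {..<2^n} \<and> subset_sums n T \<subseteq> S"
  using assms
proof (induction d arbitrary: n S rule: less_induct)
  case (less d)
  have finS: "finite S" using less.prems(2) finite_subset by blast
  have Sne: "S \<noteq> {}" using less.prems(4) by auto
  show ?case
  proof (cases "d = 1")
    case True
    obtain x where x: "x \<in> S" using Sne by blast
    have xn: "x < 2^n" using x less.prems(2) by auto
    have "subset_sums n {#x#} \<subseteq> S"
    proof
      fix s assume "s \<in> subset_sums n {#x#}"
      then obtain W where W: "W \<subseteq># {#x#}" "W \<noteq> {#}" "s = sum_mset W mod 2^n"
        unfolding subset_sums_def by blast
      have "W = {#x#}" using single_sub[OF W(1,2)] .
      then show "s \<in> S" using W(3) x xn by simp
    qed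
    then show ?thesis using True xn by (intro exI[of _ "{#x#}"]) simp
  next
    case False
    then have d2: "2 \<le> d" using less.prems(1) by simp
    define l where "l = ell d"
    have l1: "1 \<le> l" using ell_ge1 d2 l_def by simp
    have ld: "2^l \<le> d" "d < 2^(l+1)" using ell_props less.prems(1) l_def by auto
    define U where "U = {x::nat. x < 2^n \<and> \<not> 2^l dvd x}"
    have Irec: "Iset d = {1..l} \<union> (\<lambda>j. j + l + 1) ` Iset (d - 2^l + 1)"
      using Iset_rec[OF d2] l_def by simp
    have UC: "U \<subseteq> Cset n d"
    proof
      fix x assume "x \<in> U"
      then obtain i where "i \<in> {1..l}" "x \<in> layer n i" using U_layer U_def by blast
      then show "x \<in> Cset n d" unfolding Cset_def using Irec by blast
    qed
    have finC: "finite (Cset n d)" using Cset_sub finite_subset by blast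
    have cardU: "card U \<le> card (Cset n d)" using UC finC card_mono by blast
    show ?thesis
    proof (cases "n \<le> l")
      case True
      have nd: "\<not> 2^l dvd x" if "0 < x" "x < 2^n" for x :: nat
      proof
        assume "2^l dvd x"
        then have "2^l \<le> x" using that(1) by (rule dvd_imp_le)
        moreover have "(2::nat)^n \<le> 2^l" using True by simp
        ultimately show False using that(2) by simp
      qed
      have "U = {..<2^n} - {0}"
      proof (rule set_eqI)
        fix x :: nat
        show "x \<in> U \<longleftrightarrow> x \<in> {..<2^n} - {0}"
        proof (cases "x = 0")
          case True then show ?thesis unfolding U_def by simp
        next
          case False then show ?thesis unfolding U_def using nd[of x] by auto
        qed
      qed
      then have "card U = 2^n - 1" by simp
      then have c1: "card S \<ge> 2^n" using cardU less.prems(4) by linarith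
      have c2: "card S \<le> card {..<(2::nat)^n}" using less.prems(2) by (intro card_mono) auto
      have "card S = card {..<(2::nat)^n}" using c1 c2 by simp
      then have Sall: "S = {..<2^n}" using card_subset_eq[OF finite_lessThan less.prems(2)] by simp
      have ss: "subset_sums n (replicate_mset d 0) \<subseteq> {..<2^n}"
      proof
        fix s assume "s \<in> subset_sums n (replicate_mset d 0)"
        then obtain W where "s = sum_mset W mod 2^n" unfolding subset_sums_def by blast
        then show "s \<in> {..<2^n}" by simp
      qed
      have "set_mset (replicate_mset d (0::nat)) \<subseteq> {..<2^n}" by simp
      then show ?thesis using ss Sall by (intro exI[of _ "replicate_mset d 0"]) simp
    next
      case False
      then have ln: "l < n" by simp
      have cardA: "card {y::nat. y < 2^n \<and> 2^k dvd y} = 2^(n-k)" if "k \<le> n" for k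
        using card_mult that by blast
      have Usplit: "U = {..<2^n} - {y::nat. y < 2^n \<and> 2^l dvd y}" unfolding U_def by auto
      have cardU': "card U = 2^n - 2^(n-l)"
        unfolding Usplit using ln cardA[of l]
        by (subst card_Diff_subset) auto
      have US: "U \<subseteq> S"
      proof (rule ccontr)
        assume "\<not> U \<subseteq> S"
        then obtain x where x: "x \<in> U" "x \<notin> S" by blast
        obtain i where i: "i < l" "2^i dvd x" "\<not> 2^(Suc i) dvd x" using exists_val x U_def by blast
        define L where "L = {y::nat. y < 2^n \<and> 2^i dvd y \<and> \<not> 2^(Suc i) dvd y}"
        have SL: "S \<inter> L = {}"
        proof (rule ccontr)
          assume "S \<inter> L \<noteq> {}"
          then obtain y where y: "y \<in> S" "y \<in> L" by blast
          have "\<forall>k\<le>n. 2^k dvd y \<longleftrightarrow> 2^k dvd x"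
            using same_val[of i y x] y(2) i unfolding L_def by blast
          then have "x \<in> S" using less.prems(3) y(1) x(1) unfolding lclosed_def U_def by blast
          then show False using x(2) by simp
        qed
        have Ldef: "L = {y::nat. y < 2^n \<and> 2^i dvd y} - {y::nat. y < 2^n \<and> 2^(Suc i) dvd y}"
          unfolding L_def by auto
        have sub: "{y::nat. y < 2^n \<and> 2^(Suc i) dvd y} \<subseteq> {y::nat. y < 2^n \<and> 2^i dvd y}"
          using dvd_mult_left by auto
        have cL: "card L = 2^(n-i) - 2^(n - Suc i)"
          unfolding Ldef using sub cardA[of i] cardA[of "Suc i"] i(1) ln
          by (subst card_Diff_subset) auto
        have e: "(2::nat)^(n-i) = 2 * 2^(n - Suc i)" using i(1) ln
          by (metis Suc_diff_Suc diff_Suc_1 power_Suc zero_less_diff less_trans)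
        have "(2::nat)^(n-l) \<le> 2^(n - Suc i)" using i(1) by simp
        then have cL2: "2^(n-l) \<le> card L" using cL e by simp
        have "S \<subseteq> {..<2^n} - L" using less.prems(2) SL by blast
        then have "card S \<le> card ({..<2^n} - L)" by (simp add: card_mono)
        also have "... = 2^n - card L" using L_def by (subst card_Diff_subset) auto
        also have "... \<le> 2^n - 2^(n-l)" using cL2 by simp
        finally have "card S \<le> card U" using cardU' by simp
        then show False using cardU less.prems(4) by simp
      qed
      show ?thesis
      proof (cases "2^l \<in> S")
        case True
        have ss: "subset_sums n (replicate_mset d 1) \<subseteq> S"
        proof
          fix s assume "s \<in> subset_sums n (replicate_mset d 1)"
          then obtain W where W: "W \<subseteq># replicate_mset d 1" "W \<noteq> {#}" "s = sum_mset W mod 2^n"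
            unfolding subset_sums_def by blast
          have r1: "set_mset (replicate_mset d (1::nat)) = {1}" using d2 by simp
          have W1: "\<forall>y\<in>#W. y = 1" using set_mset_mono[OF W(1)] unfolding r1 by blast
          have sW: "sum_mset W = size W" using W1 by (rule sum_ones)
          have k1: "0 < size W" using W(2) by (simp add: nonempty_has_size)
          have k2: "size W \<le> d" using size_mset_mono[OF W(1)] by simp
          have "(2::nat)^(l+1) \<le> 2^n" using ln by (intro power_increasing) auto
          then have kn: "size W < 2^n" using k2 ld(2) by linarith
          then have s: "s = size W" using W(3) sW by simp
          show "s \<in> S"
          proof (cases "2^l dvd size W")
            case True
            then obtain q where q: "size W = 2^l * q" by blast
            have "q \<noteq> 0" using q k1 by auto
            moreover have "q < 2"
            proof -
              have a: "2^l*q \<le> d" using q k2 by simp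
              have b: "d < 2^l*(2::nat)" using ld(2) by (simp add: mult.commute)
              from a b have "2^l*q < 2^l*(2::nat)" by linarith
              then show ?thesis by (metis mult_less_cancel1)
            qed
            ultimately have "q = 1" by simp
            then show ?thesis using q s \<open>2^l \<in> S\<close> by simp
          next
            case False
            then have "s \<in> U" using s kn unfolding U_def by simp
            then show ?thesis using US by blast
          qed
        qed
        have "1 < (2::nat)^n" using ln by (intro one_less_power) auto
        then have "set_mset (replicate_mset d (1::nat)) \<subseteq> {..<2^n}" by simp
        then show ?thesis using ss by (intro exI[of _ "replicate_mset d 1"]) simp
      next
        case False
        note l_notin = False
        define m where "m = n - l - 1"
        define c where "c = (2::nat)^(l+1)"
        have nml: "n = m + l + 1" using ln m_def by simp
        have nm: "(2::nat)^n = c * 2^m" unfolding c_def nml by (simp add: power_add)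
        have c0: "0 < c" unfolding c_def by simp
        have lc: "(2::nat)^l dvd c" unfolding c_def by (rule le_imp_power_dvd) simp
        define S' where "S' = {y. y < 2^m \<and> c*y \<in> S}"
        define d' where "d' = d - 2^l + 1"
        have l2: "(2::nat) \<le> 2^l" using l1 by (metis power_one_right power_increasing one_le_numeral)
        have d'1: "1 \<le> d'" "d' < d" using ld(1) l2 unfolding d'_def by auto
        have S'sub: "S' \<subseteq> {..<2^m}" unfolding S'_def by auto
        have S'cl: "lclosed m S'"
          unfolding lclosed_def
        proof (intro ballI allI impI)
          fix y z :: nat assume y: "y \<in> S'" and z: "z < 2^m" and H: "\<forall>k\<le>m. (2::nat)^k dvd y \<longleftrightarrow> 2^k dvd z"
          have cz: "c*z < 2^n" using z nm c0 by simp
          have "\<forall>k\<le>n. (2::nat)^k dvd c*y \<longleftrightarrow> 2^k dvd c*z"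
          proof (intro allI impI)
            fix k assume k: "k \<le> n"
            show "(2::nat)^k dvd c*y \<longleftrightarrow> 2^k dvd c*z"
            proof (cases "k \<le> l + 1")
              case True
              then have "(2::nat)^k dvd c" unfolding c_def by (rule le_imp_power_dvd)
              then show ?thesis by simp
            next
              case False
              define k' where "k' = k - (l+1)"
              have ke: "k = (l+1) + k'" unfolding k'_def using False by simp
              have kk: "(2::nat)^k = c * 2^k'" unfolding c_def by (subst ke) (rule power_add)
              have "k' \<le> m" using k False nml unfolding k'_def by simp
              then show ?thesis unfolding kk using H c0 by simp
            qed
          qed
          then have "c*z \<in> S" using less.prems(3) y cz unfolding lclosed_def S'_def by blast
          then show "z \<in> S'" unfolding S'_def using z by simp
        qed
        have Ssplit: "S \<subseteq> U \<union> (\<lambda>y. c*y) ` S'"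
        proof
          fix x assume x: "x \<in> S"
          have xn: "x < 2^n" using x less.prems(2) by auto
          show "x \<in> U \<union> (\<lambda>y. c*y) ` S'"
          proof (cases "2^l dvd x")
            case False then show ?thesis using xn unfolding U_def by simp
          next
            case True
            show ?thesis
            proof (cases "c dvd x")
              case True
              then obtain y where y: "x = c*y" by blast
              have "y < 2^m" using xn y nm c0 by simp
              then have "y \<in> S'" using x y unfolding S'_def by simp
              then show ?thesis using y by blast
            next
              case False
              have "\<not> 2^(Suc l) dvd x" using False unfolding c_def by simp
              then have "\<forall>k\<le>n. (2::nat)^k dvd x \<longleftrightarrow> 2^k dvd (2::nat)^l"
                using same_val[of l x "2^l"] \<open>2^l dvd x\<close> by simp
              moreover have "(2::nat)^l < 2^n" using ln by simp
              ultimately have "2^l \<in> S" using less.prems(3) x unfolding lclosed_def by blast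
              then show ?thesis using l_notin by simp
            qed
          qed
        qed
        have finS': "finite S'" using S'sub finite_subset by blast
        have cS: "card S \<le> card U + card S'"
        proof -
          have "card S \<le> card (U \<union> (\<lambda>y. c*y) ` S')"
            using Ssplit by (intro card_mono) (auto simp: U_def finS')
          also have "... \<le> card U + card ((\<lambda>y. c*y) ` S')" by (rule card_Un_le)
          also have "... \<le> card U + card S'" using card_image_le[OF finS'] by simp
          finally show ?thesis .
        qed
        have Csup: "U \<union> (\<lambda>y. c*y) ` Cset m d' \<subseteq> Cset n d"
        proof -
          have "(\<lambda>y. c*y) ` Cset m d' \<subseteq> Cset n d"
          proof
            fix x assume "x \<in> (\<lambda>y. c*y) ` Cset m d'"
            then obtain y j where y: "x = c*y" "j \<in> Iset d'" "y \<in> layer m j"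
              unfolding Cset_def by blast
            have "c*y \<in> layer n (j+l+1)" using mul_layer[OF y(3), of l] unfolding c_def nml .
            moreover have "j + l + 1 \<in> Iset d" using Irec y(2) unfolding d'_def by blast
            ultimately show "x \<in> Cset n d" unfolding Cset_def y(1) by blast
          qed
          then show ?thesis using UC by blast
        qed
        have disj: "U \<inter> (\<lambda>y. c*y) ` Cset m d' = {}"
          using lc unfolding U_def by auto
        have finCm: "finite (Cset m d')" using Cset_sub finite_subset by blast
        have injc: "inj_on (\<lambda>y. c*y) (Cset m d')" using c0 by (simp add: inj_on_def)
        have finU: "finite U" unfolding U_def by simp
        have "card U + card (Cset m d') = card (U \<union> (\<lambda>y. c*y) ` Cset m d')"
          using disj finU finCm card_image[OF injc] by (simp add: card_Un_disjoint)
        also have "... \<le> card (Cset n d)" using Csup finC card_mono by blast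
        finally have "card (Cset m d') < card S'" using cS less.prems(4) by linarith
        then obtain T' where T': "size T' = d'" "set_mset T' \<subseteq> {..<2^m}" "subset_sums m T' \<subseteq> S'"
          using less.IH[OF d'1(2) d'1(1) S'sub S'cl] by blast
        define T where "T = replicate_mset (2^l - 1) 1 + image_mset (\<lambda>y. c*y) T'"
        have sizeT: "size T = d" unfolding T_def using T'(1) d'1 ld(1) l2 unfolding d'_def by simp
        have c4: "c \<noteq> 1" "even c" unfolding c_def by auto
        have setT: "set_mset T \<subseteq> {..<2^n}"
        proof -
          have "1 < (2::nat)^n" using ln by (intro one_less_power) auto
          moreover have "c*y < 2^n" if "y \<in># T'" for y using T'(2) that nm c0 by auto
          ultimately show ?thesis unfolding T_def by auto
        qed
        have ssT: "subset_sums n T \<subseteq> S"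
        proof
          fix s assume "s \<in> subset_sums n T"
          then obtain W where W: "W \<subseteq># T" "W \<noteq> {#}" "s = sum_mset W mod 2^n"
            unfolding subset_sums_def by blast
          define k where "k = count W 1"
          define W2 where "W2 = filter_mset (\<lambda>x. x \<noteq> 1) W"
          have Wsp: "W = replicate_mset k 1 + W2"
            unfolding k_def W2_def using multiset_partition[of W "\<lambda>x. x = 1"]
            by (simp add: filter_eq_replicate_mset)
          have sumW: "sum_mset W = k + sum_mset W2"
            by (subst Wsp) simp
          have ne1: "\<forall>y. c*y \<noteq> 1" using c4 by (metis dvd_mult2 odd_one)
          have fT: "filter_mset (\<lambda>x. x \<noteq> 1) T = image_mset (\<lambda>y. c*y) T'"
            unfolding T_def using ne1 by (simp add: filter_mset_image_mset)
          have "W2 \<subseteq># image_mset (\<lambda>y. c*y) T'"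
            unfolding W2_def fT[symmetric] using W(1) by (rule multiset_filter_mono)
          then obtain V where V: "V \<subseteq># T'" "W2 = image_mset (\<lambda>y. c*y) V"
            using image_mset_sub[OF \<open>W2 \<subseteq># image_mset (\<lambda>y. c*y) T'\<close>] by (elim exE conjE)
          have sW2: "sum_mset W2 = c * sum_mset V" unfolding V(2)
            by (induction V) (simp_all add: algebra_simps)
          have cW: "count W 1 \<le> count T 1" using W(1) by (simp add: subseteq_mset_def)
          have ci: "count (image_mset (\<lambda>y. c*y) T') 1 = 0"
          proof -
            have "(1::nat) \<notin># image_mset (\<lambda>y. c*y) T'"
            proof
              assume "(1::nat) \<in># image_mset (\<lambda>y. c*y) T'"
              then have "(1::nat) \<in> (\<lambda>y. c*y) ` set_mset T'" by (simp only: set_image_mset)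
              then obtain y where "1 = c*y" by (elim imageE)
              then show False using ne1 by simp
            qed
            then show ?thesis by (simp only: not_in_iff)
          qed
          have cT: "count T 1 = count (replicate_mset (2^l - 1) 1) 1 + count (image_mset (\<lambda>y. c*y) T') 1"
            unfolding T_def by simp
          have cr: "count (replicate_mset (2^l - 1) (1::nat)) 1 = 2^l - 1" by simp
          have "count T 1 = 2^l - 1" using ci cT cr by simp
          then have "k \<le> 2^l - 1" using cW unfolding k_def by simp
          moreover have "0 < (2::nat)^l" by simp
          ultimately have kl: "k < 2^l" by linarith
          show "s \<in> S"
          proof (cases "k = 0")
            case True
            then have "W = W2" using Wsp by simp
            then have "V \<noteq> {#}" using W(2) V(2) by auto
            then have "sum_mset V mod 2^m \<in> subset_sums m T'"
              unfolding subset_sums_def using V(1) \<open>V \<noteq> {#}\<close> by (intro CollectI exI[of _ V]) simp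
            then have inS: "c * (sum_mset V mod 2^m) \<in> S" using T'(3) unfolding S'_def by blast
            have "s = (c * sum_mset V) mod (c * 2^m)" using W(3) sumW sW2 True nm by simp
            also have "... = c * (sum_mset V mod 2^m)" by (rule mult_mod_right[symmetric])
            finally show ?thesis using inS by simp
          next
            case False
            have "\<not> 2^l dvd (k + c * sum_mset V)"
            proof
              assume "2^l dvd (k + c * sum_mset V)"
              moreover have "2^l dvd c * sum_mset V" using lc by simp
              ultimately have "2^l dvd k" by (simp add: dvd_add_left_iff)
              then show False using False kl by (simp add: nat_dvd_not_less)
            qed
            moreover have "(2::nat)^l dvd 2^n" using ln by (simp add: le_imp_power_dvd)
            ultimately have "\<not> 2^l dvd s" using W(3) sumW sW2 by (simp add: dvd_mod_iff)
            moreover have "s < 2^n" using W(3) by simp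
            ultimately have "s \<in> U" unfolding U_def by simp
            then show ?thesis using US by blast
          qed
        qed
        show ?thesis using sizeT setT ssT by blast
      qed
    qed
  qed
qed



lemma union_closed:
  assumes "S = (\<Union>i\<in>J. layer n i)"
  shows "S \<subseteq> {..<2^n}" "lclosed n S"
proof -
  show "S \<subseteq> {..<2^n}" using assms layer_sub by blast
  show "lclosed n S" unfolding lclosed_def
  proof (intro ballI allI impI)
    fix x y :: nat assume x: "x \<in> S" and y: "y < 2^n" and H: "\<forall>k\<le>n. (2::nat)^k dvd x \<longleftrightarrow> 2^k dvd y"
    obtain i where i: "i \<in> J" "x \<in> layer n i" using x assms by blast
    have "y \<in> layer n i"
    proof (cases "i = n + 1")
      case True
      then have "x = 0" using i(2) unfolding layer_def by simp
      then have "2^n dvd y" using H by simp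
      then have "y = 0" using y by (metis dvd_imp_le not_less not_gr0)
      then show ?thesis using True unfolding layer_def by simp
    next
      case False
      note lv = layer_val[OF i(2) False]
      have "2^(i-1) dvd y" using H lv by simp
      moreover have "\<not> 2^(Suc (i-1)) dvd y" using H lv by simp
      ultimately have "y mod 2^(Suc (i-1)) = 2^(i-1)" by (rule mod_pow_exact)
      then have "y mod 2^i = 2^(i-1)" using lv(1) by simp
      then show ?thesis using False y unfolding layer_def by simp
    qed
    then show "y \<in> S" using i(1) assms by blast
  qed
qed

theorem claim3p2:
  fixes d n :: nat and S :: "nat set"
  assumes "0 < d" and "d \<le> n"
    and "\<exists>J \<subseteq> {1..n+1}. S = (\<Union>i\<in>J. layer n i)"
    and "card S > card (Cset n d)"
  shows "\<exists>T :: nat multiset. size T = d \<and> set_mset T \<subseteq> {..<2^n} \<and> subset_sums n T \<subseteq> S"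
proof -
  obtain J where J: "S = (\<Union>i\<in>J. layer n i)" using assms(3) by blast
  show ?thesis
    using main_lemma[of d S n] assms(1,4) union_closed[OF J] by simp
qed


end
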